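(* Let $X,Y,Z$ be Banach spaces and $T:X\oplus_\infty Y\to Z$ a Lipschitz map with $T(0)=0$. Then for every $\varepsilon>0$ there exist $u=(x_1,y_1)$, $v=(x_2,y_2)\in X\oplus_\infty Y$ with $u\ne v$ and $\|u-v\|=\|x_1-x_2\|$ such that $\|Tu-Tv\|\ge(\|T\|_L-\varepsilon)\|u-v\|$.
   Context: $X\oplus_\infty Y$ is $X\times Y$ with norm $\|(x,y)\|=\max\{\|x\|,\|y\|\}$. $\|T\|_L=\sup\{\|Tu-Tv\|/\|u-v\|: u\neq v\}$. *)

theory Defs
  imports "HOL-Analysis.Analysis"
begin

definition norm_inf :: "'a::real_normed_vector \<times> 'b::real_normed_vector \<Rightarrow> real" where
  "norm_inf u = max (norm (fst u)) (norm (snd u))"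

definition lipschitz_inf :: "('a::real_normed_vector \<times> 'b::real_normed_vector \<Rightarrow> 'c::real_normed_vector) \<Rightarrow> bool" where
  "lipschitz_inf T \<longleftrightarrow> (\<exists>L. \<forall>u v. norm (T u - T v) \<le> L * norm_inf (u - v))"

definition lip_const_inf :: "('a::real_normed_vector \<times> 'b::real_normed_vector \<Rightarrow> 'c::real_normed_vector) \<Rightarrow> real" where
  "lip_const_inf T = (SUP p \<in> {(u, v). u \<noteq> v}. norm (T (fst p) - T (snd p)) / norm_inf (fst p - snd p))"

end

theory Submission
  imports Defs
begin

lemma norm_inf_pos: "w \<noteq> 0 \<Longrightarrow> norm_inf w > 0"
  unfolding norm_inf_def by (cases w) (auto simp: max_def zero_prod_def)

lemma norm_inf_nonneg: "norm_inf w \<ge> 0"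
  unfolding norm_inf_def by (simp add: le_max_iff_disj)

lemma split3:
  fixes T :: "'a::real_normed_vector \<times> 'b::real_normed_vector \<Rightarrow> 'c::real_normed_vector"
  assumes "norm_inf (u - w) + norm_inf (w - v) = norm_inf (u - v)"
    and "u \<noteq> w" "w \<noteq> v" "u \<noteq> v"
  shows "norm (T u - T w) / norm_inf (u - w) \<ge> norm (T u - T v) / norm_inf (u - v)
       \<or> norm (T w - T v) / norm_inf (w - v) \<ge> norm (T u - T v) / norm_inf (u - v)"
proof (rule ccontr)
  define f where "f = norm (T u - T v) / norm_inf (u - v)"
  have p1: "norm_inf (u - w) > 0" "norm_inf (w - v) > 0" "norm_inf (u - v) > 0"
    using assms by (auto intro!: norm_inf_pos)
  assume "\<not> ?thesis"
  hence h: "norm (T u - T w) / norm_inf (u - w) < f" "norm (T w - T v) / norm_inf (w - v) < f"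
    by (auto simp: f_def not_le)
  have "norm (T u - T w) < f * norm_inf (u - w)" using h(1) p1(1) by (simp add: pos_divide_less_eq)
  moreover have "norm (T w - T v) < f * norm_inf (w - v)" using h(2) p1(2) by (simp add: pos_divide_less_eq)
  ultimately have "norm (T u - T w) + norm (T w - T v) < f * norm_inf (u - v)"
    using assms(1) by (metis add_strict_mono distrib_left)
  moreover have "f * norm_inf (u - v) = norm (T u - T v)" using p1 by (simp add: f_def)
  moreover have "norm (T u - T v) \<le> norm (T u - T w) + norm (T w - T v)"
    using norm_triangle_ineq[of "T u - T w" "T w - T v"] by simp
  ultimately show False by simp
qed

lemma key:
  fixes T :: "'a::real_normed_vector \<times> 'b::real_normed_vector \<Rightarrow> 'c::real_normed_vector"
  assumes X: "\<exists>x::'a. x \<noteq> 0" and uv: "u \<noteq> v"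
  shows "\<exists>u' v'. u' \<noteq> v' \<and> norm_inf (u' - v') = norm (fst u' - fst v')
     \<and> norm (T u' - T v') / norm_inf (u' - v') \<ge> norm (T u - T v) / norm_inf (u - v)"
proof (cases "norm (fst u - fst v) \<ge> norm (snd u - snd v)")
  case True
  then show ?thesis using uv by (intro exI[of _ u] exI[of _ v]) (auto simp: norm_inf_def max_def)
next
  case False
  define a where "a = fst u - fst v"
  define b where "b = snd u - snd v"
  define r where "r = norm b"
  define \<alpha> where "\<alpha> = norm a"
  have ra: "\<alpha> < r" using False by (simp add: a_def b_def r_def \<alpha>_def)
  have a0: "\<alpha> \<ge> 0" by (simp add: \<alpha>_def)
  have rpos: "r > 0" using ra a0 by simp
  obtain e :: 'a where e1: "norm e = 1" and ae: "a = \<alpha> *\<^sub>R e"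
  proof (cases "a = 0")
    case True
    obtain x :: 'a where "x \<noteq> 0" using X by blast
    then show ?thesis using that[of "x /\<^sub>R norm x"] True by (simp add: \<alpha>_def)
  next
    case False
    then show ?thesis using that[of "a /\<^sub>R norm a"] by (simp add: \<alpha>_def)
  qed
  define c1 where "c1 = (r + \<alpha>) / 2"
  define c2 where "c2 = (r - \<alpha>) / 2"
  have c1p: "c1 > 0" and c2p: "c2 > 0" using ra a0 by (auto simp: c1_def c2_def)
  define w where "w = v + ((- c2) *\<^sub>R e, (c2 / r) *\<^sub>R b)"
  have wv: "w - v = ((- c2) *\<^sub>R e, (c2 / r) *\<^sub>R b)" by (simp add: w_def)
  have uw: "u - w = (c1 *\<^sub>R e, (c1 / r) *\<^sub>R b)"
  proof -
    have "u - w = (u - v) - (w - v)" by simp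
    also have "u - v = (a, b)" by (simp add: a_def b_def prod_eq_iff)
    also have "(a, b) - (w - v) = (a + c2 *\<^sub>R e, b - (c2 / r) *\<^sub>R b)" by (simp add: wv)
    also have "a + c2 *\<^sub>R e = c1 *\<^sub>R e" proof -
      have "a + c2 *\<^sub>R e = (\<alpha> + c2) *\<^sub>R e" using ae by (simp add: scaleR_left_distrib)
      also have "\<alpha> + c2 = c1" by (simp add: c1_def c2_def field_simps)
      finally show ?thesis .
    qed
    also have "b - (c2 / r) *\<^sub>R b = (c1 / r) *\<^sub>R b"
    proof -
      have "b - (c2 / r) *\<^sub>R b = (1 - c2 / r) *\<^sub>R b" by (simp add: scaleR_diff_left)
      also have "1 - c2 / r = c1 / r" using rpos by (simp add: c1_def c2_def field_simps)
      finally show ?thesis .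
    qed
    finally show ?thesis .
  qed
  have nuw: "norm_inf (u - w) = c1" "norm (fst (u - w)) = c1"
    using c1p rpos e1 by (auto simp: uw norm_inf_def r_def)
  have nwv: "norm_inf (w - v) = c2" "norm (fst (w - v)) = c2"
    using c2p rpos e1 by (auto simp: wv norm_inf_def r_def)
  have nuv: "norm_inf (u - v) = r" using False by (simp add: norm_inf_def r_def b_def)
  have "norm_inf (u - w) + norm_inf (w - v) = norm_inf (u - v)"
    using nuw nwv nuv by (simp add: c1_def c2_def)
  moreover have "u \<noteq> w" "w \<noteq> v" using nuw nwv c1p c2p by auto
  ultimately have "norm (T u - T w) / norm_inf (u - w) \<ge> norm (T u - T v) / norm_inf (u - v)
       \<or> norm (T w - T v) / norm_inf (w - v) \<ge> norm (T u - T v) / norm_inf (u - v)"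
    using split3 uv by blast
  then show ?thesis
    using \<open>u \<noteq> w\<close> \<open>w \<noteq> v\<close> nuw nwv by (metis fst_diff)
qed

theorem lemma4p2:
  fixes T :: "'a::banach \<times> 'b::banach \<Rightarrow> 'c::banach"
  assumes X_nontriv: "\<exists>x::'a. x \<noteq> 0"
    and lip: "lipschitz_inf T"
    and T0: "T (0, 0) = 0"
    and eps: "\<epsilon> > 0"
  shows "\<exists>x1 y1 x2 y2. (x1, y1) \<noteq> (x2, y2)
           \<and> norm_inf ((x1, y1) - (x2, y2)) = norm (x1 - x2)
           \<and> norm (T (x1, y1) - T (x2, y2)) \<ge> (lip_const_inf T - \<epsilon>) * norm_inf ((x1, y1) - (x2, y2))"
proof -
  define S where "S = {(u, v). u \<noteq> (v :: 'a \<times> 'b)}"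
  define f where "f = (\<lambda>p. norm (T (fst p) - T (snd p)) / norm_inf (fst p - snd p))"
  obtain L where L: "\<And>u v. norm (T u - T v) \<le> L * norm_inf (u - v)"
    using lip unfolding lipschitz_inf_def by blast
  have bdd: "bdd_above (f ` S)"
  proof (rule bdd_aboveI2)
    fix p assume "p \<in> S"
    then have "norm_inf (fst p - snd p) > 0" by (auto simp: S_def prod_eq_iff intro!: norm_inf_pos)
    then show "f p \<le> L" using L[of "fst p" "snd p"] by (simp add: f_def pos_divide_le_eq)
  qed
  obtain x0 :: 'a where "x0 \<noteq> 0" using X_nontriv by blast
  then have ne: "S \<noteq> {}" by (auto simp: S_def intro!: exI[of _ "((x0, 0), (0, 0))"])
  have "lip_const_inf T - \<epsilon> < Sup (f ` S)"
    using eps by (simp add: lip_const_inf_def S_def f_def)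
  then obtain p where "p \<in> S" and fp: "lip_const_inf T - \<epsilon> < f p"
    using less_cSUP_iff[OF ne bdd] by blast
  then have "fst p \<noteq> snd p" by (auto simp: S_def)
  from key[OF X_nontriv this, of T] obtain u' v' where
    uv': "u' \<noteq> v'" "norm_inf (u' - v') = norm (fst u' - fst v')"
    "norm (T u' - T v') / norm_inf (u' - v') \<ge> f p" unfolding f_def by blast
  have pos: "norm_inf (u' - v') > 0" using uv'(1) by (intro norm_inf_pos) simp
  have "lip_const_inf T - \<epsilon> \<le> norm (T u' - T v') / norm_inf (u' - v')" using fp uv' by simp
  then have "(lip_const_inf T - \<epsilon>) * norm_inf (u' - v') \<le> norm (T u' - T v')"
    using pos by (simp add: pos_le_divide_eq)
  then show ?thesis using uv'
    by (intro exI[of _ "fst u'"] exI[of _ "snd u'"] exI[of _ "fst v'"] exI[of _ "snd v'"]) simp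
qed

end
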